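(* Let $\alpha\in[0,\pi/2)$, $A\in\Pi^n_{s,\alpha}$ and $q\in\mathbb{C}$ with $0<|q|\le1$. Then \[ \frac{|q|^2\cos^2\alpha}{2}\|A^*A+AA^*\|\le w_q^2(A)\le\left(\sqrt{(1-|q|^2)(1+2\sin^2(\alpha))}+|q|\right)^2\frac{\|A^*A+AA^*\|}{2}. \]
   Context: $M_n$ is the algebra of complex $n\times n$ matrices with the operator norm $\|\cdot\|$. For $|q|\le1$, $w_q(A)=\sup\{|\langle Ax,y\rangle|: \|x\|=\|y\|=1,\ \langle x,y\rangle=q\}$. $W(A)=\{\langle Ax,x\rangle:\|x\|=1\}$, $S_\alpha=\{z:\operatorname{Re}z>0,\ |\operatorname{Im}z|\le\tan(\alpha)\operatorname{Re}z\}$ and $\Pi^n_{s,\alpha}=\{A\in M_n: W(A)\subseteq S_\alpha\}$. *)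

theory Defs
  imports "HOL-Analysis.Analysis"
begin

text \<open>Complex n x n matrices are modelled as complex^'n^'n, vectors as complex^'n
  (the norm on complex^'n is the Euclidean norm).\<close>

definition cinner :: "complex^'n \<Rightarrow> complex^'n \<Rightarrow> complex" where
  "cinner x y = (\<Sum>i\<in>UNIV. x $ i * cnj (y $ i))"

definition cadj :: "complex^'n^'n \<Rightarrow> complex^'n^'n" where
  "cadj A = (\<chi> i j. cnj (A $ j $ i))"

definition opnorm :: "complex^'n^'n \<Rightarrow> real" where
  "opnorm A = onorm (\<lambda>x::complex^'n. A *v x)"

definition qnumrad :: "complex \<Rightarrow> complex^'n^'n \<Rightarrow> real" where
  "qnumrad q A = Sup {cmod (cinner (A *v x) y) | x y.
      norm x = 1 \<and> norm y = 1 \<and> cinner x y = q}"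

definition numrange :: "complex^'n^'n \<Rightarrow> complex set" where
  "numrange A = {cinner (A *v x) x | x. norm x = 1}"

definition sector :: "real \<Rightarrow> complex set" where
  "sector \<alpha> = {z. Re z > 0 \<and> \<bar>Im z\<bar> \<le> tan \<alpha> * Re z}"

definition sectorial :: "real \<Rightarrow> (complex^'n^'n) set" where
  "sectorial \<alpha> = {A. numrange A \<subseteq> sector \<alpha>}"

end

theory Submission
  imports Defs
begin

definition cs :: "complex \<Rightarrow> complex^'n \<Rightarrow> complex^'n" where
  "cs c v = (\<chi> i. c * v $ i)"

definition fm :: "complex^'n^'n \<Rightarrow> complex^'n \<Rightarrow> complex^'n \<Rightarrow> complex" where
  "fm B x y = cinner (B *v x) y"

definition cmat :: "complex \<Rightarrow> complex^'n^'n \<Rightarrow> complex^'n^'n" where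
  "cmat c B = (\<chi> i j. c * B $ i $ j)"

lemma cs_nth[simp]: "cs c v $ i = c * v $ i" by (simp add: cs_def)
lemma cmat_nth[simp]: "cmat c B $ i $ j = c * B $ i $ j" by (simp add: cmat_def)
lemma cadj_nth[simp]: "cadj B $ i $ j = cnj (B $ j $ i)" by (simp add: cadj_def)

lemma cinner_add_left: "cinner (x + y) z = cinner x z + cinner y z"
  by (simp add: cinner_def distrib_right sum.distrib)
lemma cinner_add_right: "cinner x (y + z) = cinner x y + cinner x z"
  by (simp add: cinner_def distrib_left sum.distrib)
lemma cinner_diff_left: "cinner (x - y) z = cinner x z - cinner y z"
  by (simp add: cinner_def left_diff_distrib sum_subtractf)
lemma cinner_diff_right: "cinner x (y - z) = cinner x y - cinner x z"
  by (simp add: cinner_def right_diff_distrib sum_subtractf)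
lemma cinner_cs_left: "cinner (cs c x) y = c * cinner x y"
  by (simp add: cinner_def sum_distrib_left mult.assoc)
lemma cinner_cs_right: "cinner x (cs c y) = cnj c * cinner x y"
  by (simp add: cinner_def sum_distrib_left mult_ac)
lemma cinner_commute: "cinner y x = cnj (cinner x y)"
  by (simp add: cinner_def mult.commute)

lemma cinner_self: "cinner v v = complex_of_real ((norm v)\<^sup>2)"
proof -
  have "cinner v v = (\<Sum>i\<in>UNIV. complex_of_real ((cmod (v $ i))\<^sup>2))"
    unfolding cinner_def by (rule sum.cong[OF refl]) (rule complex_norm_square[symmetric])
  also have "\<dots> = complex_of_real (\<Sum>i\<in>UNIV. (cmod (v $ i))\<^sup>2)" by simp
  also have "(\<Sum>i\<in>UNIV. (cmod (v $ i))\<^sup>2) = (norm v)\<^sup>2"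
    by (simp add: norm_vec_def L2_set_def sum_nonneg)
  finally show ?thesis .
qed

lemma mv_cs: "B *v (cs c v) = cs c (B *v v)"
  by (simp add: vec_eq_iff matrix_vector_mult_def sum_distrib_left mult_ac)
lemma mv_cmat: "(cmat c B) *v v = cs c (B *v v)"
  by (simp add: vec_eq_iff matrix_vector_mult_def sum_distrib_left mult_ac)

lemma cinner_mv_left: "cinner (B *v x) y = cinner x (cadj B *v y)"
proof -
  have "cinner (B *v x) y = (\<Sum>i\<in>UNIV. \<Sum>j\<in>UNIV. B $ i $ j * x $ j * cnj (y $ i))"
    by (simp add: cinner_def matrix_vector_mult_def sum_distrib_right)
  also have "\<dots> = (\<Sum>j\<in>UNIV. \<Sum>i\<in>UNIV. B $ i $ j * x $ j * cnj (y $ i))"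
    by (rule sum.swap)
  also have "\<dots> = cinner x (cadj B *v y)"
    by (simp add: cinner_def matrix_vector_mult_def sum_distrib_left mult_ac)
  finally show ?thesis .
qed

lemma cadj_cadj[simp]: "cadj (cadj B) = B" by (simp add: vec_eq_iff)

lemma fm_adj: "fm (cadj B) x y = cnj (fm B y x)"
proof -
  have "fm (cadj B) x y = cinner x (B *v y)" by (simp add: fm_def cinner_mv_left)
  also have "\<dots> = cnj (cinner (B *v y) x)" by (rule cinner_commute)
  finally show ?thesis by (simp add: fm_def)
qed

lemma fm_expand: "fm B (x + cs l y) (x + cs l y) = fm B x x + cnj l * fm B x y + l * fm B y x + l * cnj l * fm B y y"
  by (simp add: fm_def matrix_vector_right_distrib mv_cs cinner_add_left cinner_add_right
      cinner_cs_left cinner_cs_right algebra_simps)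

lemma herm_swap: "cadj B = B \<Longrightarrow> fm B y x = cnj (fm B x y)"
  by (metis fm_adj)

lemma quad_disc:
  fixes a b m :: real
  assumes "0 \<le> a" "0 \<le> b" "0 \<le> m" "\<And>r. 0 \<le> a - 2 * r * m + r\<^sup>2 * m * b"
  shows "m \<le> a * b"
proof (cases "m = 0")
  case True then show ?thesis using assms by simp
next
  case False
  show ?thesis
  proof (cases "b = 0")
    case True
    have "0 \<le> a - 2 * ((a+1)/(2*m)) * m" using assms(4)[of "(a+1)/(2*m)"] True by simp
    also have "\<dots> = -1" using False by (simp add: field_simps)
    finally show ?thesis by simp
  next
    case b: False
    have "0 \<le> a - 2 * (1/b) * m + (1/b)\<^sup>2 * m * b" using assms(4) .
    also have "\<dots> = (a * b - m) / b" using b by (simp add: field_simps power2_eq_square)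
    finally show ?thesis using b assms(2) by (simp add: divide_nonneg_pos zero_le_divide_iff)
  qed
qed

lemma herm_cs:
  assumes herm: "cadj B = B" and psd: "\<And>v. 0 \<le> Re (fm B v v)"
  shows "(cmod (fm B x y))\<^sup>2 \<le> Re (fm B x x) * Re (fm B y y)"
proof -
  define z where "z = fm B x y"
  have yx: "fm B y x = cnj z" unfolding z_def by (rule herm_swap[OF herm])
  have zz: "z * cnj z = complex_of_real ((cmod z)\<^sup>2)" by (rule complex_norm_square[symmetric])
  have "0 \<le> Re (fm B x x) - 2 * r * (cmod z)\<^sup>2 + r\<^sup>2 * (cmod z)\<^sup>2 * Re (fm B y y)" for r :: real
  proof -
    have "fm B (x + cs (- (of_real r * z)) y) (x + cs (- (of_real r * z)) y)
      = fm B x x - 2 * of_real r * (z * cnj z) + (of_real r)\<^sup>2 * (z * cnj z) * fm B y y"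
      unfolding fm_expand yx z_def[symmetric] by (simp add: algebra_simps power2_eq_square)
    also have "\<dots> = fm B x x - of_real (2 * r * (cmod z)\<^sup>2) + of_real (r\<^sup>2 * (cmod z)\<^sup>2) * fm B y y"
      unfolding zz by simp
    finally have "Re (fm B (x + cs (- (of_real r * z)) y) (x + cs (- (of_real r * z)) y))
       = Re (fm B x x) - 2 * r * (cmod z)\<^sup>2 + r\<^sup>2 * (cmod z)\<^sup>2 * Re (fm B y y)" by simp
    then show ?thesis using psd by metis
  qed
  then have "(cmod z)\<^sup>2 \<le> Re (fm B x x) * Re (fm B y y)"
    by (intro quad_disc psd) auto
  then show ?thesis by (simp add: z_def)
qed

lemma norm_from_cinner: "norm v = sqrt (Re (cinner v v))"
  by (simp add: cinner_self)

lemma norm_cs: "norm (cs c v) = cmod c * norm v"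
proof -
  have "complex_of_real ((norm (cs c v))\<^sup>2) = cinner (cs c v) (cs c v)" by (rule cinner_self[symmetric])
  also have "\<dots> = (c * cnj c) * cinner v v" by (simp add: cinner_cs_left cinner_cs_right)
  also have "\<dots> = complex_of_real ((cmod c * norm v)\<^sup>2)"
    by (simp only: complex_norm_square[symmetric] cinner_self of_real_mult[symmetric] power_mult_distrib)
  finally have "(norm (cs c v))\<^sup>2 = (cmod c * norm v)\<^sup>2" by (simp only: of_real_eq_iff)
  then show ?thesis by (rule power2_eq_imp_eq) auto
qed

lemma fm_mat1: "fm (mat 1) x y = cinner x y" by (simp add: fm_def)

lemma cadj_mat1: "cadj (mat 1 :: complex^'n^'n) = mat 1"
  by (simp add: vec_eq_iff mat_def)

lemma cinner_cs_ineq: "cmod (cinner x y) \<le> norm x * norm y"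
proof -
  have "(cmod (fm (mat 1) x y))\<^sup>2 \<le> Re (fm (mat 1) x x) * Re (fm (mat 1) y y)"
    by (rule herm_cs[OF cadj_mat1]) (simp add: fm_mat1 cinner_self)
  then have "(cmod (cinner x y))\<^sup>2 \<le> (norm x * norm y)\<^sup>2"
    by (simp add: fm_mat1 cinner_self power_mult_distrib)
  then show ?thesis by (rule power2_le_imp_le) simp
qed

lemma fm_add_mat: "fm (B + C) x y = fm B x y + fm C x y"
  by (simp add: fm_def matrix_vector_mult_add_rdistrib cinner_add_left)
lemma fm_diff_mat: "fm (B - C) x y = fm B x y - fm C x y"
  by (simp add: fm_def matrix_vector_mult_diff_rdistrib cinner_diff_left)
lemma fm_cmat: "fm (cmat c B) x y = c * fm B x y"
  by (simp add: fm_def mv_cmat cinner_cs_left)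

lemma opnorm_bound: "norm (B *v x) \<le> opnorm B * norm x"
  unfolding opnorm_def by (rule onorm) simp

lemma cinner_axis: "cinner x (axis i 1) = x $ i"
  by (simp add: cinner_def axis_def if_distrib cong: if_cong)

lemma norm_axis_c: "norm (axis i (1::complex)) = 1"
  by (simp add: norm_from_cinner cinner_axis)

lemma exists_ortho:
  fixes x :: "complex^'n"
  assumes "CARD('n) \<ge> 2"
  shows "\<exists>z. norm z = 1 \<and> cinner x z = 0"
proof -
  obtain i j :: 'n where ij: "i \<noteq> j"
  proof -
    have "\<not> (\<forall>i j::'n. i = j)"
    proof
      assume "\<forall>i j::'n. i = j"
      then have "(UNIV::'n set) \<subseteq> {undefined}" by auto
      then have "CARD('n) \<le> 1" using card_mono[of "{undefined}" UNIV] by simp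
      with assms show False by simp
    qed
    then show ?thesis using that by blast
  qed
  define z0 where "z0 = cs (- cnj (x $ j)) (axis i 1) + cs (cnj (x $ i)) (axis j 1)"
  have c0: "cinner x z0 = 0"
    by (simp add: z0_def cinner_add_right cinner_cs_right cinner_axis)
  show ?thesis
  proof (cases "z0 = 0")
    case True
    then have "z0 $ i = 0" by simp
    then have "x $ j = 0" using ij by (simp add: z0_def axis_def)
    have "z0 $ j = 0" using True by simp
    then have "x $ i = 0" using ij by (simp add: z0_def axis_def)
    then show ?thesis using norm_axis_c[of i] cinner_axis[of x i] by metis
  next
    case False
    then have "norm z0 > 0" by simp
    then show ?thesis
      by (intro exI[of _ "cs (complex_of_real (1 / norm z0)) z0"])
         (simp add: norm_cs cinner_cs_right c0 norm_divide)
  qed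
qed

lemma sumsq_ineq:
  fixes a b c d u v :: real
  assumes "0 \<le> a" "0 \<le> b" "0 \<le> c" "0 \<le> d" "0 \<le> u" "0 \<le> v"
    "u\<^sup>2 \<le> a * b" "v\<^sup>2 \<le> c * d"
  shows "(u + v)\<^sup>2 \<le> (a + c) * (b + d)"
proof -
  have ab: "0 \<le> a * b" using assms by simp
  have "u\<^sup>2 * v\<^sup>2 \<le> (a * b) * (c * d)"
    by (rule mult_mono) (use assms ab in auto)
  moreover have "(a * d + c * b)\<^sup>2 - 4 * (a * b) * (c * d) = (a * d - c * b)\<^sup>2"
    by algebra
  moreover have "(2 * u * v)\<^sup>2 = 4 * (u\<^sup>2 * v\<^sup>2)" by algebra
  ultimately have "(2 * u * v)\<^sup>2 \<le> (a * d + c * b)\<^sup>2"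
    using zero_le_power2[of "a*d - c*b"] by linarith
  then have "2 * u * v \<le> a * d + c * b"
    by (rule power2_le_imp_le) (use assms in simp)
  moreover have "(u+v)\<^sup>2 = u\<^sup>2 + v\<^sup>2 + 2 * u * v" by algebra
  moreover have "(a+c)*(b+d) = a*b + c*d + (a*d + c*b)" by algebra
  ultimately show ?thesis using assms by linarith
qed

definition hmat :: "complex^'n^'n \<Rightarrow> complex^'n^'n" where
  "hmat A = cmat (1/2) (A + cadj A)"
definition kmat :: "complex^'n^'n \<Rightarrow> complex^'n^'n" where
  "kmat A = cmat (- \<i>/2) (A - cadj A)"

lemma hmat_herm: "cadj (hmat A) = hmat A"
  by (simp add: vec_eq_iff hmat_def add.commute)
lemma kmat_herm: "cadj (kmat A) = kmat A"
  by (simp add: vec_eq_iff kmat_def algebra_simps)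

lemma A_decomp: "A = hmat A + cmat \<i> (kmat A)"
  by (simp add: vec_eq_iff hmat_def kmat_def field_simps)
lemma Aadj_decomp: "cadj A = hmat A - cmat \<i> (kmat A)"
  by (simp add: vec_eq_iff hmat_def kmat_def field_simps)

lemma fm_h_self: "fm (hmat A) v v = complex_of_real (Re (fm A v v))"
  by (simp add: hmat_def fm_cmat fm_add_mat fm_adj complex_add_cnj)
lemma fm_k_self: "fm (kmat A) v v = complex_of_real (Im (fm A v v))"
  by (simp add: kmat_def fm_cmat fm_diff_mat fm_adj complex_diff_cnj mult.left_commute[of \<i>])

lemma fm_A_hk: "fm A x y = fm (hmat A) x y + \<i> * fm (kmat A) x y"
  by (subst A_decomp) (simp add: fm_add_mat fm_cmat)

lemma cadj_add: "cadj (B + C) = cadj B + cadj C" by (simp add: vec_eq_iff)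
lemma cadj_diff: "cadj (B - C) = cadj B - cadj C" by (simp add: vec_eq_iff)
lemma cadj_cmat: "cadj (cmat c B) = cmat (cnj c) (cadj B)" by (simp add: vec_eq_iff)

lemma form_bounds:
  fixes A :: "complex^'n^'n" and t :: real
  assumes t0: "0 \<le> t"
    and pos: "\<And>v. 0 \<le> Re (fm A v v)"
    and sec: "\<And>v. \<bar>Im (fm A v v)\<bar> \<le> t * Re (fm A v v)"
  shows "(cmod (fm (kmat A) x y))\<^sup>2 \<le> t\<^sup>2 * Re (fm A x x) * Re (fm A y y)"
    and "(cmod (fm A x y))\<^sup>2 \<le> (1 + t\<^sup>2) * Re (fm A x x) * Re (fm A y y)"
proof -
  define H where "H = hmat A"
  define K where "K = kmat A"
  define P where "P = cmat (complex_of_real t) H + K"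
  define N where "N = cmat (complex_of_real t) H - K"
  have hH: "cadj H = H" by (simp add: H_def hmat_herm)
  have hK: "cadj K = K" by (simp add: K_def kmat_herm)
  have hP: "cadj P = P" by (simp add: P_def cadj_add cadj_cmat hH hK)
  have hN: "cadj N = N" by (simp add: N_def cadj_diff cadj_cmat hH hK)
  have Pself: "Re (fm P v v) = t * Re (fm A v v) + Im (fm A v v)" for v
    by (simp add: P_def fm_add_mat fm_cmat H_def K_def fm_h_self fm_k_self)
  have Nself: "Re (fm N v v) = t * Re (fm A v v) - Im (fm A v v)" for v
    by (simp add: N_def fm_diff_mat fm_cmat H_def K_def fm_h_self fm_k_self)
  have pP: "0 \<le> Re (fm P v v)" for v using sec[of v] by (simp add: Pself abs_le_iff)
  have pN: "0 \<le> Re (fm N v v)" for v using sec[of v] by (simp add: Nself abs_le_iff)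
  define u where "u = cmod (fm P x y)"
  define w where "w = cmod (fm N x y)"
  have "(u + w)\<^sup>2 \<le> (Re (fm P x x) + Re (fm N x x)) * (Re (fm P y y) + Re (fm N y y))"
    by (rule sumsq_ineq) (use pP pN herm_cs[OF hP pP] herm_cs[OF hN pN] in \<open>auto simp: u_def w_def\<close>)
  also have "\<dots> = 4 * t\<^sup>2 * Re (fm A x x) * Re (fm A y y)"
    by (simp add: Pself Nself power2_eq_square)
  finally have uw: "(u + w)\<^sup>2 \<le> 4 * t\<^sup>2 * Re (fm A x x) * Re (fm A y y)" .
  have "fm K x y = (fm P x y - fm N x y) / 2"
    by (simp add: P_def N_def fm_add_mat fm_diff_mat)
  then have "cmod (fm K x y) = cmod (fm P x y - fm N x y) / 2" by (metis norm_divide norm_numeral)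
  also have "\<dots> \<le> (u + w) / 2"
    using norm_triangle_ineq4[of "fm P x y" "fm N x y"] by (simp add: u_def w_def)
  finally have Kle: "cmod (fm K x y) \<le> (u + w) / 2" .
  then have "(cmod (fm K x y))\<^sup>2 \<le> ((u + w) / 2)\<^sup>2"
    by (intro power_mono) auto
  with uw show "(cmod (fm (kmat A) x y))\<^sup>2 \<le> t\<^sup>2 * Re (fm A x x) * Re (fm A y y)"
    by (simp add: K_def power_divide)
  show "(cmod (fm A x y))\<^sup>2 \<le> (1 + t\<^sup>2) * Re (fm A x x) * Re (fm A y y)"
  proof (cases "t = 0")
    case True
    have "(u + w)\<^sup>2 \<le> 0" using uw True by simp
    then have "u + w = 0" by simp
    then have "fm K x y = 0" using Kle by simp
    then have "fm A x y = fm H x y" using fm_A_hk[of A x y] by (simp add: H_def K_def)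
    moreover have "(cmod (fm H x y))\<^sup>2 \<le> Re (fm H x x) * Re (fm H y y)"
      by (rule herm_cs[OF hH]) (simp add: H_def fm_h_self pos)
    ultimately show ?thesis by (simp add: H_def fm_h_self True)
  next
    case False
    then have tp: "0 < t" using t0 by simp
    have fP: "fm P x y = of_real t * fm H x y + fm K x y" by (simp add: P_def fm_add_mat fm_cmat)
    have fN: "fm N x y = of_real t * fm H x y - fm K x y" by (simp add: N_def fm_diff_mat fm_cmat)
    have fA: "fm A x y = fm H x y + \<i> * fm K x y" using fm_A_hk[of A x y] by (simp add: H_def K_def)
    have alg: "complex_of_real (2 * t) * (a + \<i> * b) = (1 + \<i> * t) * (of_real t * a + b) + (1 - \<i> * t) * (of_real t * a - b)" for a b
      by (simp add: algebra_simps)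
    have eq: "complex_of_real (2 * t) * fm A x y = (1 + \<i> * t) * fm P x y + (1 - \<i> * t) * fm N x y"
      unfolding fP fN fA by (rule alg)
    have c1: "cmod (1 + \<i> * t) = sqrt (1 + t\<^sup>2)" by (simp add: cmod_def)
    have c2: "cmod (1 - \<i> * t) = sqrt (1 + t\<^sup>2)" by (simp add: cmod_def)
    have "2 * t * cmod (fm A x y) = cmod (complex_of_real (2 * t) * fm A x y)"
      using tp by (simp add: norm_mult)
    also have "\<dots> = cmod ((1 + \<i> * t) * fm P x y + (1 - \<i> * t) * fm N x y)" by (simp only: eq)
    also have "\<dots> \<le> cmod ((1 + \<i> * t) * fm P x y) + cmod ((1 - \<i> * t) * fm N x y)"
      by (rule norm_triangle_ineq)
    also have "\<dots> = sqrt (1 + t\<^sup>2) * (u + w)"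
      by (simp only: norm_mult c1 c2 u_def w_def distrib_left)
    finally have "(2 * t * cmod (fm A x y))\<^sup>2 \<le> (sqrt (1 + t\<^sup>2) * (u + w))\<^sup>2"
      by (intro power_mono) (use tp in auto)
    also have "\<dots> = (1 + t\<^sup>2) * (u + w)\<^sup>2" by (simp add: power_mult_distrib)
    also have "\<dots> \<le> (1 + t\<^sup>2) * (4 * t\<^sup>2 * Re (fm A x x) * Re (fm A y y))"
      by (intro mult_left_mono uw) simp
    finally have "4 * t\<^sup>2 * (cmod (fm A x y))\<^sup>2 \<le> 4 * t\<^sup>2 * ((1 + t\<^sup>2) * Re (fm A x x) * Re (fm A y y))"
      by (simp add: power_mult_distrib algebra_simps)
    then show ?thesis using tp by simp
  qed
qed

lemma fm_cs_self: "fm B (cs c v) (cs c v) = (c * cnj c) * fm B v v"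
  by (simp add: fm_def mv_cs cinner_cs_left cinner_cs_right mult_ac)

lemma sector_forms:
  fixes A :: "complex^'n^'n"
  assumes "A \<in> sectorial \<alpha>"
  shows "0 \<le> Re (fm A v v) \<and> \<bar>Im (fm A v v)\<bar> \<le> tan \<alpha> * Re (fm A v v)"
proof (cases "v = 0")
  case True
  then show ?thesis by (simp add: fm_def cinner_def)
next
  case False
  define r where "r = norm v"
  have r0: "r > 0" using False by (simp add: r_def)
  define u where "u = cs (complex_of_real (1 / r)) v"
  have nu: "norm u = 1" using r0 by (simp add: u_def norm_cs r_def norm_divide)
  have "cinner (A *v u) u \<in> numrange A" unfolding numrange_def using nu by blast
  then have "fm A u u \<in> sector \<alpha>" using assms by (auto simp: sectorial_def fm_def)
  then have s: "0 < Re (fm A u u)" "\<bar>Im (fm A u u)\<bar> \<le> tan \<alpha> * Re (fm A u u)"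
    by (auto simp: sector_def)
  have fu: "fm A u u = complex_of_real ((1 / r)\<^sup>2) * fm A v v"
    by (simp add: u_def fm_cs_self power2_eq_square)
  have re: "Re (fm A u u) = (1 / r)\<^sup>2 * Re (fm A v v)" "Im (fm A u u) = (1 / r)\<^sup>2 * Im (fm A v v)"
    by (simp_all add: fu)
  have p: "0 < (1 / r)\<^sup>2" using r0 by simp
  from s(1) have "0 \<le> Re (fm A v v)" using p unfolding re by (simp add: zero_less_mult_iff)
  moreover from s(2) have "(1 / r)\<^sup>2 * \<bar>Im (fm A v v)\<bar> \<le> (1 / r)\<^sup>2 * (tan \<alpha> * Re (fm A v v))"
    unfolding re using p by (simp add: abs_mult mult_ac)
  then have "\<bar>Im (fm A v v)\<bar> \<le> tan \<alpha> * Re (fm A v v)" using p by simp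
  ultimately show ?thesis by simp
qed

lemma pm_apply: "(cadj A ** A + A ** cadj A) *v v = cadj A *v (A *v v) + A *v (cadj A *v v)"
  by (simp add: matrix_vector_mult_add_rdistrib matrix_vector_mul_assoc)

lemma pm_self: "Re (cinner ((cadj A ** A + A ** cadj A) *v v) v) = (norm (A *v v))\<^sup>2 + (norm (cadj A *v v))\<^sup>2"
proof -
  have "cinner ((cadj A ** A + A ** cadj A) *v v) v = cinner (A *v v) (A *v v) + cinner (cadj A *v v) (cadj A *v v)"
    by (simp add: pm_apply cinner_add_left cinner_mv_left[of "cadj A"] cinner_mv_left[of A])
  then show ?thesis by (simp add: cinner_self)
qed

lemma pm_bound: "(norm (A *v v))\<^sup>2 + (norm (cadj A *v v))\<^sup>2 \<le> opnorm (cadj A ** A + A ** cadj A) * (norm v)\<^sup>2"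
proof -
  let ?P = "cadj A ** A + A ** cadj A"
  have "(norm (A *v v))\<^sup>2 + (norm (cadj A *v v))\<^sup>2 = Re (cinner (?P *v v) v)" by (rule pm_self[symmetric])
  also have "\<dots> \<le> cmod (cinner (?P *v v) v)" by (rule complex_Re_le_cmod)
  also have "\<dots> \<le> norm (?P *v v) * norm v" by (rule cinner_cs_ineq)
  also have "\<dots> \<le> opnorm ?P * norm v * norm v" by (intro mult_right_mono opnorm_bound) simp
  finally show ?thesis by (simp add: power2_eq_square mult.assoc)
qed

lemma fm_self_bound: "(cmod (fm A v v))\<^sup>2 \<le> opnorm (cadj A ** A + A ** cadj A) / 2 * ((norm v)\<^sup>2 * (norm v)\<^sup>2)"
proof -
  let ?a = "norm (A *v v)" and ?b = "norm (cadj A *v v)"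
  have 1: "cmod (fm A v v) \<le> ?a * norm v" unfolding fm_def by (rule cinner_cs_ineq)
  have "cmod (fm A v v) = cmod (fm (cadj A) v v)" by (simp add: fm_adj)
  also have "\<dots> \<le> ?b * norm v" unfolding fm_def by (rule cinner_cs_ineq)
  finally have 2: "cmod (fm A v v) \<le> ?b * norm v" .
  have "(cmod (fm A v v))\<^sup>2 \<le> (?a * norm v) * (?b * norm v)"
    unfolding power2_eq_square by (intro mult_mono 1 2) auto
  also have "\<dots> = (?a * ?b) * (norm v)\<^sup>2" by (simp add: power2_eq_square mult_ac)
  also have "\<dots> \<le> ((?a\<^sup>2 + ?b\<^sup>2) / 2) * (norm v)\<^sup>2"
    by (intro mult_right_mono) (use sum_squares_bound[of ?a ?b] in \<open>auto simp: field_simps mult.assoc\<close>)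
  also have "\<dots> \<le> (opnorm (cadj A ** A + A ** cadj A) * (norm v)\<^sup>2 / 2) * (norm v)\<^sup>2"
    by (intro mult_right_mono divide_right_mono pm_bound) auto
  finally show ?thesis by (simp add: mult_ac)
qed

lemma pm_hk: "(cadj A ** A + A ** cadj A) *v v = cs 2 (hmat A *v (hmat A *v v) + kmat A *v (kmat A *v v))"
proof -
  let ?H = "hmat A" and ?K = "kmat A"
  have "(cadj A ** A + A ** cadj A) *v v = (?H - cmat \<i> ?K) *v ((?H + cmat \<i> ?K) *v v) + (?H + cmat \<i> ?K) *v ((?H - cmat \<i> ?K) *v v)"
    unfolding pm_apply by (simp only: A_decomp[symmetric] Aadj_decomp[symmetric])
  also have "\<dots> = cs 2 (?H *v (?H *v v) + ?K *v (?K *v v))"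
    by (simp add: matrix_vector_mult_add_rdistrib matrix_vector_mult_diff_rdistrib matrix_vector_right_distrib
        matrix_vector_mult_diff_distrib mv_cmat mv_cs vec_eq_iff algebra_simps)
  finally show ?thesis .
qed

lemma sq_bound:
  fixes u e D n :: real
  assumes "0 \<le> u" "0 \<le> D" "0 \<le> n" "u\<^sup>2 \<le> e" "e\<^sup>2 \<le> D\<^sup>2 * n\<^sup>2 * u\<^sup>2"
  shows "u \<le> D * n"
proof (cases "u = 0")
  case True then show ?thesis using assms(2,3) by simp
next
  case False
  then have u0: "0 < u\<^sup>2" by simp
  have "(u\<^sup>2)\<^sup>2 \<le> e\<^sup>2" by (rule power_mono[OF assms(4)]) (rule zero_le_power2)
  also have "\<dots> \<le> D\<^sup>2 * n\<^sup>2 * u\<^sup>2" by (rule assms(5))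
  also have "D\<^sup>2 * n\<^sup>2 * u\<^sup>2 = (D * n)\<^sup>2 * u\<^sup>2" by (simp only: power_mult_distrib)
  finally have "u\<^sup>2 * u\<^sup>2 \<le> (D * n)\<^sup>2 * u\<^sup>2" by (simp only: power2_eq_square[of "u\<^sup>2"])
  then have "u\<^sup>2 \<le> (D * n)\<^sup>2" using u0 by (rule mult_right_le_imp_le)
  then show ?thesis by (rule power2_le_imp_le) (use assms(2,3) in simp)
qed

lemma trig_facts:
  fixes \<alpha> :: real
  assumes "0 \<le> \<alpha>" "\<alpha> < pi / 2"
  shows "0 < cos \<alpha>" "0 \<le> tan \<alpha>" "(cos \<alpha>)\<^sup>2 * (1 + (tan \<alpha>)\<^sup>2) = 1"
    and "\<And>X c. 0 \<le> c \<Longrightarrow> X \<le> 2 * c \<Longrightarrow> X \<le> (1 + (tan \<alpha>)\<^sup>2) * c \<Longrightarrow> X \<le> (1 + 2 * (sin \<alpha>)\<^sup>2) * c"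
proof -
  show c0: "0 < cos \<alpha>" using assms by (intro cos_gt_zero_pi) auto
  show "0 \<le> tan \<alpha>"
  proof (cases "\<alpha> = 0")
    case True then show ?thesis by simp
  next
    case False then show ?thesis using assms tan_gt_zero[of \<alpha>] by simp
  qed
  have sc: "(sin \<alpha>)\<^sup>2 = 1 - (cos \<alpha>)\<^sup>2" by (simp add: sin_squared_eq)
  have t2: "1 + (tan \<alpha>)\<^sup>2 = 1 / (cos \<alpha>)\<^sup>2"
    using c0 by (simp add: tan_def power_divide field_simps sc)
  show "(cos \<alpha>)\<^sup>2 * (1 + (tan \<alpha>)\<^sup>2) = 1" using c0 by (simp add: t2)
  fix X c :: real
  assume c: "0 \<le> c" and X1: "X \<le> 2 * c" and X2: "X \<le> (1 + (tan \<alpha>)\<^sup>2) * c"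
  define k where "k = (cos \<alpha>)\<^sup>2"
  have k0: "0 < k" using c0 by (simp add: k_def)
  have k1: "k \<le> 1" using sc zero_le_power2[of "sin \<alpha>"] by (simp add: k_def)
  show "X \<le> (1 + 2 * (sin \<alpha>)\<^sup>2) * c"
  proof (cases "k \<le> 1/2")
    case True
    have "2 \<le> 1 + 2 * (sin \<alpha>)\<^sup>2" using True by (simp add: sc k_def)
    then have "2 * c \<le> (1 + 2 * (sin \<alpha>)\<^sup>2) * c" using c by (intro mult_right_mono)
    then show ?thesis using X1 by linarith
  next
    case False
    have "1 / k \<le> 3 - 2 * k"
    proof -
      have "0 \<le> (2 * k - 1) * (1 - k)" using False k1 by (intro mult_nonneg_nonneg) auto
      then have "1 \<le> (3 - 2 * k) * k" by (simp add: algebra_simps power2_eq_square)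
      then show ?thesis using k0 by (simp add: field_simps)
    qed
    then have "1 + (tan \<alpha>)\<^sup>2 \<le> 1 + 2 * (sin \<alpha>)\<^sup>2" by (simp add: t2 sc k_def[symmetric])
    then have "(1 + (tan \<alpha>)\<^sup>2) * c \<le> (1 + 2 * (sin \<alpha>)\<^sup>2) * c" using c by (intro mult_right_mono)
    then show ?thesis using X2 by linarith
  qed
qed

lemma cinner_zero_right[simp]: "cinner x 0 = 0" by (simp add: cinner_def)
lemma cinner_zero_left[simp]: "cinner 0 x = 0" by (simp add: cinner_def)

lemma exists_y:
  fixes A :: "complex^'n^'n" and x :: "complex^'n"
  assumes "CARD('n) \<ge> 2" "norm x = 1" "cmod q \<le> 1"
  shows "\<exists>y. norm y = 1 \<and> cinner x y = q \<and> cmod q * cmod (fm A x x) \<le> cmod (fm A x y)"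
proof -
  obtain z where z: "norm z = 1" "cinner x z = 0" using exists_ortho[OF assms(1)] by blast
  have zx: "cinner z x = 0" using z(2) cinner_commute[of z x] by simp
  have xx: "cinner x x = 1" using assms(2) by (simp add: cinner_self)
  have zz: "cinner z z = 1" using z(1) by (simp add: cinner_self)
  define r where "r = sqrt (1 - (cmod q)\<^sup>2)"
  have "(cmod q)\<^sup>2 \<le> 1" using assms(3) power_le_one[of "cmod q" 2] by simp
  then have r2: "r\<^sup>2 = 1 - (cmod q)\<^sup>2" by (simp add: r_def)
  define y where "y s = cs (cnj q) x + cs (complex_of_real (s * r)) z" for s :: real
  have ny: "norm (y s) = 1" if "s\<^sup>2 = 1" for s
  proof -
    have "cinner (y s) (y s) = q * cnj q + complex_of_real (s\<^sup>2 * r\<^sup>2)"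
      by (simp add: y_def cinner_add_left cinner_add_right cinner_cs_left cinner_cs_right xx zz z(2) zx
          power2_eq_square mult_ac)
    also have "\<dots> = 1" using that by (simp add: r2 complex_norm_square[symmetric])
    finally have "complex_of_real ((norm (y s))\<^sup>2) = 1" by (simp add: cinner_self)
    then have "(norm (y s))\<^sup>2 = 1" by (metis of_real_eq_1_iff)
    then show ?thesis using norm_ge_zero[of "y s"] by (simp add: power2_eq_1_iff)
  qed
  have cy: "cinner x (y s) = q" for s
    by (simp add: y_def cinner_add_right cinner_cs_right xx z(2))
  have fy: "fm A x (y s) = q * fm A x x + complex_of_real (s * r) * fm A x z" for s
    by (simp add: y_def fm_def cinner_add_right cinner_cs_right)
  define p where "p = q * fm A x x"
  define b where "b = complex_of_real r * fm A x z"
  have "2 * cmod p \<le> cmod (p + b) + cmod (p - b)"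
    using norm_triangle_ineq[of "p + b" "p - b"] by simp
  then have "cmod p \<le> cmod (p + b) \<or> cmod p \<le> cmod (p - b)" by linarith
  then obtain s :: real where s: "s\<^sup>2 = 1" "cmod p \<le> cmod (fm A x (y s))"
  proof
    assume "cmod p \<le> cmod (p + b)"
    then show ?thesis using that[of 1] by (simp add: fy p_def b_def)
  next
    assume "cmod p \<le> cmod (p - b)"
    then show ?thesis using that[of "-1"] by (simp add: fy p_def b_def)
  qed
  show ?thesis
    by (intro exI[of _ "y s"]) (use s ny cy in \<open>auto simp: p_def norm_mult\<close>)
qed

lemma sqrt_bound_from_sq: "(x::real)\<^sup>2 \<le> y \<Longrightarrow> x \<le> sqrt y"
  by (rule real_le_rsqrt)

lemma exists_unit: "\<exists>x::complex^'n. norm x = 1"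
  using norm_axis_c by blast

lemma qnumrad_facts:
  fixes A :: "complex^'n^'n"
  assumes "CARD('n) \<ge> 2" "cmod q \<le> 1"
    and bnd: "\<forall>x y. norm x = 1 \<longrightarrow> norm y = 1 \<longrightarrow> cinner x y = q \<longrightarrow> cmod (cinner (A *v x) y) \<le> R"
  shows "qnumrad q A \<le> R" "0 \<le> qnumrad q A"
    and "norm a = 1 \<Longrightarrow> norm b = 1 \<Longrightarrow> cinner a b = q \<Longrightarrow> cmod (cinner (A *v a) b) \<le> qnumrad q A"
proof -
  define S where "S = {cmod (cinner (A *v x) y) | x y. norm x = 1 \<and> norm y = 1 \<and> cinner x y = q}"
  have Q: "qnumrad q A = Sup S" by (simp add: qnumrad_def S_def)
  obtain x0 :: "complex^'n" where x0: "norm x0 = 1" using exists_unit by blast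
  obtain y0 where y0: "norm y0 = 1" "cinner x0 y0 = q" using exists_y[OF assms(1) x0 assms(2), of A] by blast
  have mem: "cmod (cinner (A *v x0) y0) \<in> S" using x0 y0 by (auto simp: S_def)
  have ne: "S \<noteq> {}" using mem by blast
  have ub: "\<And>s. s \<in> S \<Longrightarrow> s \<le> R" using bnd by (auto simp: S_def)
  have bdd: "bdd_above S" using ub by (rule bdd_aboveI)
  show "qnumrad q A \<le> R" unfolding Q using ne ub by (rule cSup_least)
  show "0 \<le> qnumrad q A" unfolding Q using cSup_upper[OF mem bdd] by (meson norm_ge_zero order_trans)
  show "norm a = 1 \<Longrightarrow> norm b = 1 \<Longrightarrow> cinner a b = q \<Longrightarrow> cmod (cinner (A *v a) b) \<le> qnumrad q A"
    unfolding Q by (rule cSup_upper[OF _ bdd]) (auto simp: S_def)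
qed

lemma upper_part:
  fixes A :: "complex^'n^'n" and \<alpha> :: real and q :: complex
  assumes card: "CARD('n) \<ge> 2"
    and a0: "0 \<le> \<alpha>" and a1: "\<alpha> < pi / 2"
    and sA: "A \<in> sectorial \<alpha>"
    and q1: "cmod q \<le> 1"
  shows "\<forall>x y. norm x = 1 \<longrightarrow> norm y = 1 \<longrightarrow> cinner x y = q \<longrightarrow> cmod (cinner (A *v x) y) \<le>
     (sqrt ((1 - (cmod q)\<^sup>2) * (1 + 2 * (sin \<alpha>)\<^sup>2)) + cmod q) * sqrt (opnorm (cadj A ** A + A ** cadj A) / 2)"
proof (intro allI impI)
  fix x y :: "complex^'n"
  assume nx: "norm x = 1" and ny: "norm y = 1" and xy: "cinner x y = q"
  define t where "t = tan \<alpha>"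
  have t0: "0 \<le> t" using trig_facts(2)[OF a0 a1] by (simp add: t_def)
  have pos: "0 \<le> Re (fm A v v)" for v using sector_forms[OF sA] by blast
  have sec: "\<bar>Im (fm A v v)\<bar> \<le> t * Re (fm A v v)" for v using sector_forms[OF sA] by (simp add: t_def)
  define op where "op = opnorm (cadj A ** A + A ** cadj A)"
  have op0: "0 \<le> op" unfolding op_def opnorm_def by (rule onorm_pos_le) simp
  define m where "m = op / 2"
  have m0: "0 \<le> m" using op0 by (simp add: m_def)
  have sm: "sqrt m * sqrt m = m" using m0 by simp
  have cb: "cmod (fm A v v) \<le> sqrt m * (norm v)\<^sup>2" for v
  proof -
    have "(cmod (fm A v v))\<^sup>2 \<le> m * ((norm v)\<^sup>2 * (norm v)\<^sup>2)"
      using fm_self_bound[of A v] by (simp add: m_def op_def)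
    also have "\<dots> = (sqrt m * (norm v)\<^sup>2)\<^sup>2" using m0 by (simp add: power_mult_distrib power2_eq_square)
    finally show ?thesis by (rule power2_le_imp_le) (use m0 in simp)
  qed
  have hb: "Re (fm A v v) \<le> sqrt m * (norm v)\<^sup>2" for v
    using cb[of v] complex_Re_le_cmod[of "fm A v v"] by linarith
  define w where "w = y - cs (cnj q) x"
  have split: "fm A x y = q * fm A x x + fm A x w"
    by (simp add: w_def fm_def cinner_diff_right cinner_cs_right)
  have xx: "cinner x x = 1" using nx by (simp add: cinner_self)
  have yy: "cinner y y = 1" using ny by (simp add: cinner_self)
  have yx: "cinner y x = cnj q" using cinner_commute[of y x] xy by simp
  have nw: "(norm w)\<^sup>2 = 1 - (cmod q)\<^sup>2"
  proof -
    have "complex_of_real ((norm w)\<^sup>2) = cinner w w" by (rule cinner_self[symmetric])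
    also have "\<dots> = 1 - q * cnj q"
      by (simp add: w_def cinner_diff_left cinner_diff_right cinner_cs_left cinner_cs_right xx yy yx xy)
    also have "\<dots> = complex_of_real (1 - (cmod q)\<^sup>2)"
      by (simp add: complex_norm_square[symmetric] del: of_real_power)
    finally show ?thesis by (simp only: of_real_eq_iff)
  qed
  have hx: "Re (fm A x x) \<le> sqrt m" using hb[of x] nx by simp
  have hw: "Re (fm A w w) \<le> sqrt m * (norm w)\<^sup>2" by (rule hb)
  have "(cmod (fm A x w))\<^sup>2 \<le> (1 + t\<^sup>2) * Re (fm A x x) * Re (fm A w w)"
    by (rule form_bounds(2)[OF t0 pos sec])
  also have "\<dots> = (1 + t\<^sup>2) * (Re (fm A x x) * Re (fm A w w))" by (simp only: mult.assoc)
  also have "\<dots> \<le> (1 + t\<^sup>2) * (sqrt m * (sqrt m * (norm w)\<^sup>2))"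
    by (intro mult_left_mono mult_mono hx hw pos) (use m0 in auto)
  also have "\<dots> = (1 + t\<^sup>2) * (m * (norm w)\<^sup>2)" by (simp only: mult.assoc[symmetric] sm)
  finally have B1: "(cmod (fm A x w))\<^sup>2 \<le> (1 + t\<^sup>2) * (m * (norm w)\<^sup>2)" .
  have "cmod (fm A x w) \<le> norm (A *v x) * norm w" unfolding fm_def by (rule cinner_cs_ineq)
  then have "(cmod (fm A x w))\<^sup>2 \<le> (norm (A *v x) * norm w)\<^sup>2" by (intro power_mono) auto
  also have "\<dots> = (norm (A *v x))\<^sup>2 * (norm w)\<^sup>2" by (simp only: power_mult_distrib)
  also have "\<dots> \<le> op * (norm w)\<^sup>2"
  proof (rule mult_right_mono)
    show "(norm (A *v x))\<^sup>2 \<le> op"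
    proof -
      have e1: "(norm (A *v x))\<^sup>2 + (norm (cadj A *v x))\<^sup>2 \<le> op" using pm_bound[of A x] nx by (simp add: op_def)
      have e2: "0 \<le> (norm (cadj A *v x))\<^sup>2" by (rule zero_le_power2)
      from e1 e2 show ?thesis by linarith
    qed
  qed simp
  also have "\<dots> = 2 * (m * (norm w)\<^sup>2)" by (simp add: m_def)
  finally have B2: "(cmod (fm A x w))\<^sup>2 \<le> 2 * (m * (norm w)\<^sup>2)" .
  have "(cmod (fm A x w))\<^sup>2 \<le> (1 + 2 * (sin \<alpha>)\<^sup>2) * (m * (norm w)\<^sup>2)"
    by (rule trig_facts(4)[OF a0 a1 _ B2 B1[unfolded t_def]]) (use m0 in simp)
  also have "\<dots> = ((1 - (cmod q)\<^sup>2) * (1 + 2 * (sin \<alpha>)\<^sup>2)) * m" by (simp add: nw mult_ac)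
  finally have "cmod (fm A x w) \<le> sqrt (((1 - (cmod q)\<^sup>2) * (1 + 2 * (sin \<alpha>)\<^sup>2)) * m)"
    by (rule real_le_rsqrt)
  then have Bw: "cmod (fm A x w) \<le> sqrt ((1 - (cmod q)\<^sup>2) * (1 + 2 * (sin \<alpha>)\<^sup>2)) * sqrt m"
    by (simp only: real_sqrt_mult)
  have ax: "cmod (fm A x x) \<le> sqrt m" using cb[of x] nx by simp
  have "cmod (fm A x y) \<le> cmod q * cmod (fm A x x) + cmod (fm A x w)"
    unfolding split by (metis norm_mult norm_triangle_ineq)
  also have "\<dots> \<le> cmod q * sqrt m + sqrt ((1 - (cmod q)\<^sup>2) * (1 + 2 * (sin \<alpha>)\<^sup>2)) * sqrt m"
    by (intro add_mono mult_left_mono ax Bw) simp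
  finally show "cmod (cinner (A *v x) y) \<le> (sqrt ((1 - (cmod q)\<^sup>2) * (1 + 2 * (sin \<alpha>)\<^sup>2)) + cmod q) * sqrt (opnorm (cadj A ** A + A ** cadj A) / 2)"
    by (simp add: fm_def m_def op_def algebra_simps)
qed

lemma lower_part:
  fixes A :: "complex^'n^'n" and \<alpha> :: real and q :: complex
  assumes card: "CARD('n) \<ge> 2"
    and a0: "0 \<le> \<alpha>" and a1: "\<alpha> < pi / 2"
    and sA: "A \<in> sectorial \<alpha>"
    and q0: "0 < cmod q" and q1: "cmod q \<le> 1"
  shows "(cmod q)\<^sup>2 * (cos \<alpha>)\<^sup>2 / 2 * opnorm (cadj A ** A + A ** cadj A) \<le> (qnumrad q A)\<^sup>2"
proof -
  define t where "t = tan \<alpha>"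
  have t0: "0 \<le> t" using trig_facts(2)[OF a0 a1] by (simp add: t_def)
  have pos: "0 \<le> Re (fm A v v)" for v using sector_forms[OF sA] by blast
  have sec: "\<bar>Im (fm A v v)\<bar> \<le> t * Re (fm A v v)" for v using sector_forms[OF sA] by (simp add: t_def)
  define Q where "Q = qnumrad q A"
  note qf = qnumrad_facts[OF card q1 upper_part[OF card a0 a1 sA q1]]
  have Q0: "0 \<le> Q" unfolding Q_def by (rule qf(2))
  define W where "W = Q / cmod q"
  have W0: "0 \<le> W" unfolding W_def using Q0 q0 by (rule divide_nonneg_pos)
  have hu: "Re (fm A x x) \<le> W" if nx: "norm x = 1" for x
  proof -
    obtain y where y: "norm y = 1" "cinner x y = q" "cmod q * cmod (fm A x x) \<le> cmod (fm A x y)"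
      using exists_y[OF card nx q1, of A] by blast
    have "cmod (fm A x y) \<le> Q" using qf(3)[OF nx y(1,2)] by (simp add: fm_def Q_def)
    with y(3) have "cmod q * cmod (fm A x x) \<le> Q" by linarith
    then have "cmod (fm A x x) \<le> W" using q0 by (simp add: W_def pos_le_divide_eq mult.commute)
    then show ?thesis using complex_Re_le_cmod[of "fm A x x"] by linarith
  qed
  have hv: "Re (fm A v v) \<le> W * (norm v)\<^sup>2" for v
  proof (cases "v = 0")
    case True then show ?thesis by (simp add: fm_def)
  next
    case False
    define r where "r = norm v"
    have r0: "r > 0" using False by (simp add: r_def)
    define u where "u = cs (complex_of_real (1 / r)) v"
    have nu: "norm u = 1" using r0 by (simp add: u_def norm_cs r_def norm_divide)
    have "Re (fm A u u) = (1 / r)\<^sup>2 * Re (fm A v v)"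
      by (simp add: u_def fm_cs_self power2_eq_square)
    with hu[OF nu] have "(1 / r)\<^sup>2 * Re (fm A v v) \<le> W" by simp
    then have "Re (fm A v v) \<le> W * r\<^sup>2" using r0 by (simp add: field_simps power2_eq_square)
    then show ?thesis by (simp add: r_def)
  qed
  define H where "H = hmat A"
  define K where "K = kmat A"
  have hH: "cadj H = H" by (simp add: H_def hmat_herm)
  have reH: "Re (fm H v v) = Re (fm A v v)" for v by (simp add: H_def fm_h_self)
  have nH: "norm (H *v v) \<le> W * norm v" for v
  proof (rule sq_bound)
    define e where "e = cmod (fm H v (H *v v))"
    have "(norm (H *v v))\<^sup>2 = Re (fm H v (H *v v))" by (simp add: fm_def cinner_self)
    also have "\<dots> \<le> e" unfolding e_def by (rule complex_Re_le_cmod)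
    finally show "(norm (H *v v))\<^sup>2 \<le> e" .
    have "e\<^sup>2 \<le> Re (fm H v v) * Re (fm H (H *v v) (H *v v))"
      unfolding e_def by (rule herm_cs[OF hH]) (simp add: reH pos)
    also have "\<dots> \<le> (W * (norm v)\<^sup>2) * (W * (norm (H *v v))\<^sup>2)"
      unfolding reH by (intro mult_mono hv pos) (use W0 in simp)
    also have "\<dots> = W\<^sup>2 * (norm v)\<^sup>2 * (norm (H *v v))\<^sup>2" by (simp add: power2_eq_square mult_ac)
    finally show "e\<^sup>2 \<le> W\<^sup>2 * (norm v)\<^sup>2 * (norm (H *v v))\<^sup>2" .
  qed (use W0 in auto)
  have nK: "norm (K *v v) \<le> (t * W) * norm v" for v
  proof (rule sq_bound)
    define e where "e = cmod (fm K v (K *v v))"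
    have "(norm (K *v v))\<^sup>2 = Re (fm K v (K *v v))" by (simp add: fm_def cinner_self)
    also have "\<dots> \<le> e" unfolding e_def by (rule complex_Re_le_cmod)
    finally show "(norm (K *v v))\<^sup>2 \<le> e" .
    have "e\<^sup>2 \<le> t\<^sup>2 * Re (fm A v v) * Re (fm A (K *v v) (K *v v))"
      unfolding e_def K_def by (rule form_bounds(1)[OF t0 pos sec])
    also have "\<dots> = t\<^sup>2 * (Re (fm A v v) * Re (fm A (K *v v) (K *v v)))" by (simp only: mult.assoc)
    also have "\<dots> \<le> t\<^sup>2 * ((W * (norm v)\<^sup>2) * (W * (norm (K *v v))\<^sup>2))"
      by (intro mult_left_mono mult_mono hv pos) (use W0 in simp_all)
    also have "\<dots> = (t * W)\<^sup>2 * (norm v)\<^sup>2 * (norm (K *v v))\<^sup>2" by (simp add: power2_eq_square mult_ac)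
    finally show "e\<^sup>2 \<le> (t * W)\<^sup>2 * (norm v)\<^sup>2 * (norm (K *v v))\<^sup>2" .
  qed (use W0 t0 in auto)
  have nP: "norm ((cadj A ** A + A ** cadj A) *v v) \<le> (2 * (1 + t\<^sup>2) * W\<^sup>2) * norm v" for v
  proof -
    have "norm ((cadj A ** A + A ** cadj A) *v v) = 2 * norm (H *v (H *v v) + K *v (K *v v))"
      by (simp add: pm_hk norm_cs H_def K_def)
    also have "\<dots> \<le> 2 * (norm (H *v (H *v v)) + norm (K *v (K *v v)))"
      by (intro mult_left_mono norm_triangle_ineq) simp
    also have "\<dots> \<le> 2 * (W * norm (H *v v) + (t * W) * norm (K *v v))"
      by (intro mult_left_mono add_mono nH nK) simp
    also have "\<dots> \<le> 2 * (W * (W * norm v) + (t * W) * ((t * W) * norm v))"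
      by (intro mult_left_mono add_mono nH nK) (use W0 t0 in simp_all)
    also have "\<dots> = (2 * (1 + t\<^sup>2) * W\<^sup>2) * norm v" by (simp add: power2_eq_square algebra_simps)
    finally show ?thesis .
  qed
  have op: "opnorm (cadj A ** A + A ** cadj A) \<le> 2 * (1 + t\<^sup>2) * W\<^sup>2"
    unfolding opnorm_def by (rule onorm_le) (rule nP)
  have "(cmod q)\<^sup>2 * (cos \<alpha>)\<^sup>2 / 2 * opnorm (cadj A ** A + A ** cadj A)
      \<le> (cmod q)\<^sup>2 * (cos \<alpha>)\<^sup>2 / 2 * (2 * (1 + t\<^sup>2) * W\<^sup>2)"
    by (intro mult_left_mono op) simp
  also have "\<dots> = (cmod q)\<^sup>2 * W\<^sup>2 * ((cos \<alpha>)\<^sup>2 * (1 + t\<^sup>2))" by (simp add: algebra_simps)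
  also have "\<dots> = (cmod q)\<^sup>2 * W\<^sup>2" using trig_facts(3)[OF a0 a1] by (simp add: t_def)
  also have "\<dots> = Q\<^sup>2" using q0 by (simp add: W_def power_divide)
  finally show ?thesis by (simp add: Q_def)
qed

theorem theorem2p16:
  fixes A :: "complex^'n^'n" and \<alpha> :: real and q :: complex
  assumes "CARD('n) \<ge> 2"
    and "0 \<le> \<alpha>" and "\<alpha> < pi / 2"
    and "A \<in> sectorial \<alpha>"
    and "0 < cmod q" and "cmod q \<le> 1"
  shows "(cmod q)\<^sup>2 * (cos \<alpha>)\<^sup>2 / 2 * opnorm (cadj A ** A + A ** cadj A) \<le> (qnumrad q A)\<^sup>2
    \<and> (qnumrad q A)\<^sup>2 \<le> (sqrt ((1 - (cmod q)\<^sup>2) * (1 + 2 * (sin \<alpha>)\<^sup>2)) + cmod q)\<^sup>2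
          * opnorm (cadj A ** A + A ** cadj A) / 2"
proof -
  note card = assms(1) and a0 = assms(2) and a1 = assms(3) and sA = assms(4) and q0 = assms(5) and q1 = assms(6)
  define op where "op = opnorm (cadj A ** A + A ** cadj A)"
  have op0: "0 \<le> op" unfolding op_def opnorm_def by (rule onorm_pos_le) simp
  define c where "c = sqrt ((1 - (cmod q)\<^sup>2) * (1 + 2 * (sin \<alpha>)\<^sup>2)) + cmod q"
  note qf = qnumrad_facts[OF card q1 upper_part[OF card a0 a1 sA q1]]
  have "(qnumrad q A)\<^sup>2 \<le> (c * sqrt (op / 2))\<^sup>2"
    using qf(1) qf(2) by (intro power_mono) (simp_all add: c_def op_def)
  also have "\<dots> = c\<^sup>2 * op / 2" using op0 by (simp add: power_mult_distrib)
  finally have U: "(qnumrad q A)\<^sup>2 \<le> c\<^sup>2 * op / 2" .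
  show ?thesis using lower_part[OF card a0 a1 sA q0 q1] U by (simp add: c_def op_def)
qed

end
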